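(* Let $A$ be a semilocal ring, $Z$ a finite $A$-scheme, $Y \subset Z$ a closed subscheme, and $d > 0$. Suppose given a closed immersion $\iota_Y\colon Y \hookrightarrow \mathbb{A}^d_A$ over $A$ and, for every maximal ideal $\mathfrak{m} \subset A$, a closed immersion $\iota_\mathfrak{m}\colon Z_{k_\mathfrak{m}} \hookrightarrow \mathbb{A}^d_{k_\mathfrak{m}}$ over $k_\mathfrak{m}$, such that these are compatible (i.e. $\iota_\mathfrak{m}$ and $\iota_Y$ agree on $Y_{k_\mathfrak{m}}$). Then there is a closed immersion $\iota\colon Z \hookrightarrow \mathbb{A}^d_A$ over $A$ that restricts to $\iota_Y$ on $Y$ and to $\iota_\mathfrak{m}$ on $Z_{k_\mathfrak{m}}$ for every maximal ideal $\mathfrak{m}$.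
   Context: $k_\mathfrak{m}$ denotes the residue field of $A$ at $\mathfrak{m}$. *)

theory Defs
  imports "HOL-Algebra.Algebra"
begin

text \<open>Affine algebraic geometry over a ring, translated to commutative algebra.
  A finite A-scheme Z = Spec B, where B is an A-algebra (structure map phi)
  that is finitely generated as an A-module.\<close>

definition semilocal :: "('a, 'm) ring_scheme \<Rightarrow> bool" where
  "semilocal A \<longleftrightarrow> cring A \<and> finite {m. maximalideal m A}"

definition finite_algebra ::
  "('a, 'm) ring_scheme \<Rightarrow> ('b, 'n) ring_scheme \<Rightarrow> ('a \<Rightarrow> 'b) \<Rightarrow> bool" where
  "finite_algebra A B phi \<longleftrightarrow> cring A \<and> cring B \<and> phi \<in> ring_hom A B \<and>
     (\<exists>S. finite S \<and> S \<subseteq> carrier B \<and>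
        (\<forall>b \<in> carrier B. \<exists>c \<in> S \<rightarrow> carrier A.
            b = (\<Oplus>\<^bsub>B\<^esub> s\<in>S. phi (c s) \<otimes>\<^bsub>B\<^esub> s)))"

text \<open>A d-tuple x of elements of an A-algebra C (structure map psi) generates C
  as an A-algebra, i.e. the A-algebra map A[X_1..X_d] -> C, X_i |-> x i, is
  surjective, i.e. defines a closed immersion Spec C -> affine d-space over A.\<close>

definition generates_algebra ::
  "('a, 'm) ring_scheme \<Rightarrow> ('c, 'n) ring_scheme \<Rightarrow> ('a \<Rightarrow> 'c) \<Rightarrow> nat \<Rightarrow> (nat \<Rightarrow> 'c) \<Rightarrow> bool" where
  "generates_algebra A C psi d x \<longleftrightarrow>
     (\<forall>i<d. x i \<in> carrier C) \<and>
     generate_ring C (psi ` carrier A \<union> x ` {..<d}) = carrier C"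

abbreviation closed_imm ::
  "('a, 'm) ring_scheme \<Rightarrow> ('c, 'n) ring_scheme \<Rightarrow> ('a \<Rightarrow> 'c) \<Rightarrow> nat \<Rightarrow> (nat \<Rightarrow> 'c) \<Rightarrow> bool" where
  "closed_imm \<equiv> generates_algebra"

text \<open>Extension of the maximal ideal m to B: the ideal mB; B Quot mB is the
  coordinate ring of the fibre Z over k_m = A/m.\<close>
definition ext_ideal :: "('b, 'n) ring_scheme \<Rightarrow> ('a \<Rightarrow> 'b) \<Rightarrow> 'a set \<Rightarrow> 'b set" where
  "ext_ideal B phi m = Idl\<^bsub>B\<^esub> (phi ` m)"

end

theory Submission
  imports Defs
begin


lemma (in cring) krull:
  assumes "ideal I R" "\<one> \<notin> I"
  shows "\<exists>m. maximalideal m R \<and> I \<subseteq> m"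
proof -
  define SS where "SS = {J. ideal J R \<and> I \<subseteq> J \<and> \<one> \<notin> J}"
  have "\<exists>M\<in>SS. \<forall>K\<in>SS. M \<subseteq> K \<longrightarrow> K = M"
  proof (rule subset_Zorn_nonempty)
    show "SS \<noteq> {}" using assms SS_def by auto
  next
    fix C assume C: "C \<noteq> {}" "subset.chain SS C"
    have "subset.chain {J. ideal J R} C" using C(2) unfolding pred_on.chain_def SS_def by auto
    from chain_Union_is_ideal[OF this] C(1) have "ideal (\<Union>C) R" by simp
    moreover have "I \<subseteq> \<Union>C" "\<one> \<notin> \<Union>C" using C unfolding pred_on.chain_def SS_def by blast+
    ultimately show "\<Union>C \<in> SS" unfolding SS_def by auto
  qed
  then obtain M where M: "M \<in> SS" "\<And>K. K \<in> SS \<Longrightarrow> M \<subseteq> K \<Longrightarrow> K = M" by auto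
  have "maximalideal M R"
  proof (rule maximalidealI)
    show "ideal M R" using M SS_def by auto
    show "carrier R \<noteq> M" using M SS_def by auto
    fix J assume J: "ideal J R" "M \<subseteq> J" "J \<subseteq> carrier R"
    show "J = M \<or> J = carrier R"
    proof (cases "\<one> \<in> J")
      case True thus ?thesis using ideal.one_imp_carrier[OF J(1)] by auto
    next
      case False thus ?thesis using M J SS_def by auto
    qed
  qed
  thus ?thesis using M SS_def by auto
qed

lemma (in cring) jacobson_unit:
  assumes "a \<in> carrier R" "\<And>m. maximalideal m R \<Longrightarrow> a \<in> m"
  shows "\<one> \<ominus> a \<in> Units R"
proof (rule ccontr)
  assume nu: "\<one> \<ominus> a \<notin> Units R"
  have c: "\<one> \<ominus> a \<in> carrier R" using assms by auto
  have "\<one> \<notin> PIdl (\<one> \<ominus> a)"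
    using nu ideal_eq_carrier_iff[OF c] ideal.one_imp_carrier[OF cgenideal_ideal[OF c]] by auto
  then obtain m where m: "maximalideal m R" "PIdl (\<one> \<ominus> a) \<subseteq> m"
    using krull[OF cgenideal_ideal[OF c]] by auto
  interpret m: maximalideal m R by fact
  have "\<one> \<ominus> a \<in> m" using m cgenideal_self[OF c] by auto
  moreover have "a \<in> m" using assms m by auto
  ultimately have "(\<one> \<ominus> a) \<oplus> a \<in> m" by (simp add: m.a_closed)
  moreover have "(\<one> \<ominus> a) \<oplus> a = \<one>" using assms(1) by algebra
  ultimately show False using m.one_imp_carrier m.I_notcarr by auto
qed


lemma (in ring) coset_eq_iff:
  assumes J: "ideal J R" and a: "a \<in> carrier R" and b: "b \<in> carrier R"
  shows "(J +> a = J +> b) \<longleftrightarrow> a \<ominus> b \<in> J"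
proof -
  interpret J: ideal J R by (rule J)
  show ?thesis
  proof
    assume e: "J +> a = J +> b"
    have "a \<in> J +> a" using J.a_rcos_self[OF a] .
    hence "a \<in> J +> b" using e by simp
    thus "a \<ominus> b \<in> J" using J.a_rcos_module_minus[OF ring_axioms b a] by simp
  next
    assume "a \<ominus> b \<in> J"
    hence "a \<in> J +> b" using J.a_rcos_module_minus[OF ring_axioms b a] by simp
    thus "J +> a = J +> b" using J.a_repr_independence'[OF _ b] by simp
  qed
qed

lemma (in ring) ideal_minus:
  assumes J: "ideal J R" and "a \<in> J" "b \<in> J"
  shows "a \<ominus> b \<in> J"
proof -
  interpret J: ideal J R by (rule J)
  have "a \<oplus> \<ominus> b \<in> J" using assms(2,3) by (simp add: J.a_closed J.a_inv_closed)
  thus ?thesis using assms(2,3) J.Icarr by (simp add: minus_eq)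
qed

lemma (in cring) comax:
  assumes m: "maximalideal m R" and m': "maximalideal m' R" and ne: "m \<noteq> m'"
  shows "\<exists>q\<in>m'. \<one> \<ominus> q \<in> m"
proof -
  interpret m: maximalideal m R by (rule m)
  interpret m': maximalideal m' R by (rule m')
  have id: "ideal (m <+> m') R" by (rule add_ideals[OF m.is_ideal m'.is_ideal])
  have sub1: "m \<subseteq> m <+> m'"
  proof
    fix x assume x: "x \<in> m"
    have "x = x \<oplus> \<zero>" using m.Icarr[OF x] by simp
    thus "x \<in> m <+> m'" using x m'.zero_closed unfolding set_add_def' by blast
  qed
  have sub2: "m' \<subseteq> m <+> m'"
  proof
    fix x assume x: "x \<in> m'"
    have "x = \<zero> \<oplus> x" using m'.Icarr[OF x] by simp
    thus "x \<in> m <+> m'" using x m.zero_closed unfolding set_add_def' by blast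
  qed
  have sub3: "m <+> m' \<subseteq> carrier R" using ideal.Icarr[OF id] by blast
  have "m <+> m' = carrier R"
  proof (rule ccontr)
    assume "m <+> m' \<noteq> carrier R"
    hence e: "m <+> m' = m" using m.I_maximal[OF id sub1 sub3] by blast
    hence "m' \<subseteq> m" using sub2 by simp
    hence "m = m' \<or> m = carrier R" using m'.I_maximal[OF m.is_ideal] m.a_subset by blast
    thus False using ne m.I_notcarr by auto
  qed
  hence "\<one> \<in> m <+> m'" by simp
  then obtain p q where pq: "p \<in> m" "q \<in> m'" "\<one> = p \<oplus> q" unfolding set_add_def' by blast
  have "\<one> \<ominus> q = p" using pq m.Icarr[OF pq(1)] m'.Icarr[OF pq(2)] by (simp add: a_minus_def a_assoc r_neg)
  thus ?thesis using pq by blast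
qed

lemma (in cring) e_exists:
  assumes "finite F" "\<And>m. m \<in> F \<Longrightarrow> maximalideal m R" "maximalideal m0 R" "m0 \<notin> F"
  shows "\<exists>e\<in>carrier R. (\<forall>m\<in>F. e \<in> m) \<and> \<one> \<ominus> e \<in> m0"
  using assms
proof (induction F rule: finite_induct)
  case empty
  have "\<one> \<ominus> \<one> = \<zero>" by simp
  thus ?case using maximalideal.axioms(1)[OF empty(2)] ideal.axioms(1) additive_subgroup.zero_closed
    by (metis empty_iff one_closed)
next
  case (insert m1 F)
  have mx: "\<And>m. m \<in> insert m1 F \<Longrightarrow> maximalideal m R" by (rule insert.prems(1))
  have m0: "maximalideal m0 R" by (rule insert.prems(2))
  have "m0 \<notin> F" using insert.prems(3) by blast
  then obtain e' where e': "e' \<in> carrier R" "\<forall>m\<in>F. e' \<in> m" "\<one> \<ominus> e' \<in> m0"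
    using insert.IH mx m0 by blast
  have "m0 \<noteq> m1" using insert.prems(3) by auto
  then obtain q where q: "q \<in> m1" "\<one> \<ominus> q \<in> m0" using comax[OF m0 mx[of m1]] by auto
  interpret m1: maximalideal m1 R using mx by blast
  interpret m0: maximalideal m0 R by (rule m0)
  have qc: "q \<in> carrier R" using m1.Icarr[OF q(1)] .
  have "e' \<otimes> q \<in> m1" using m1.I_l_closed[OF q(1) e'(1)] .
  moreover have "\<forall>m\<in>F. e' \<otimes> q \<in> m"
    using e'(2) qc mx by (metis insertCI ideal.I_r_closed maximalideal.axioms(1))
  moreover have "\<one> \<ominus> e' \<otimes> q = (\<one> \<ominus> q) \<oplus> q \<otimes> (\<one> \<ominus> e')"
    using qc e'(1) by algebra
  moreover have "(\<one> \<ominus> q) \<oplus> q \<otimes> (\<one> \<ominus> e') \<in> m0"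
    using q(2) m0.I_l_closed[OF e'(3) qc] m0.a_closed by blast
  ultimately show ?case using e'(1) qc by auto
qed



locale fin_alg = cring B for B (structure) + fixes A and phi and S
  assumes A_cring: "cring A" and hom: "phi \<in> ring_hom A B"
  and S_fin: "finite S" and S_sub: "S \<subseteq> carrier B"
  and S_gen: "\<And>b. b \<in> carrier B \<Longrightarrow> \<exists>c \<in> S \<rightarrow> carrier A. b = (\<Oplus>s\<in>S. phi (c s) \<otimes> s)"
begin

sublocale A: cring A by (rule A_cring)

lemma phi_closed[simp]: "a \<in> carrier A \<Longrightarrow> phi a \<in> carrier B"
  using ring_hom_memE(1)[OF hom] .
lemma phi_mult: "a \<in> carrier A \<Longrightarrow> b \<in> carrier A \<Longrightarrow> phi (a \<otimes>\<^bsub>A\<^esub> b) = phi a \<otimes> phi b"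
  using ring_hom_memE(2)[OF hom] .
lemma phi_add: "a \<in> carrier A \<Longrightarrow> b \<in> carrier A \<Longrightarrow> phi (a \<oplus>\<^bsub>A\<^esub> b) = phi a \<oplus> phi b"
  using ring_hom_memE(3)[OF hom] .
lemma phi_one[simp]: "phi \<one>\<^bsub>A\<^esub> = \<one>"
  using ring_hom_memE(4)[OF hom] .
lemma phi_zero[simp]: "phi \<zero>\<^bsub>A\<^esub> = \<zero>"
  using ring_hom_zero[OF hom A.ring_axioms ring_axioms] .
lemma phi_neg: "a \<in> carrier A \<Longrightarrow> phi (\<ominus>\<^bsub>A\<^esub> a) = \<ominus> phi a"
proof -
  assume a: "a \<in> carrier A"
  have "phi (\<ominus>\<^bsub>A\<^esub> a) \<oplus> phi a = \<zero>"
    using a by (simp flip: phi_add add: A.l_neg)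
  thus ?thesis using a by (metis A.a_inv_closed add.inv_equality phi_closed)
qed
lemma phi_minus: "a \<in> carrier A \<Longrightarrow> b \<in> carrier A \<Longrightarrow> phi (a \<ominus>\<^bsub>A\<^esub> b) = phi a \<ominus> phi b"
  by (simp add: A.minus_eq minus_eq phi_add phi_neg)

definition lc where "lc c T = (\<Oplus>s\<in>T. phi (c s) \<otimes> s)"

lemma term_closed[simp]: "s \<in> carrier B \<Longrightarrow> a \<in> carrier A \<Longrightarrow> phi a \<otimes> s \<in> carrier B"
  by simp

lemma lc_closed[simp]: "T \<subseteq> carrier B \<Longrightarrow> c \<in> T \<rightarrow> carrier A \<Longrightarrow> lc c T \<in> carrier B"
  unfolding lc_def by (intro finsum_closed) (auto simp: Pi_def subset_iff)

lemma lc_empty[simp]: "lc c {} = \<zero>" unfolding lc_def by simp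

lemma lc_insert: "finite T \<Longrightarrow> s \<notin> T \<Longrightarrow> insert s T \<subseteq> carrier B \<Longrightarrow> c \<in> insert s T \<rightarrow> carrier A
   \<Longrightarrow> lc c (insert s T) = phi (c s) \<otimes> s \<oplus> lc c T"
  unfolding lc_def by (subst finsum_insert) (auto simp: Pi_def subset_iff)

lemma lc_cong: "T \<subseteq> carrier B \<Longrightarrow> c' \<in> T \<rightarrow> carrier A \<Longrightarrow> (\<And>s. s \<in> T \<Longrightarrow> c s = c' s) \<Longrightarrow> lc c T = lc c' T"
  unfolding lc_def by (intro finsum_cong) (auto simp: Pi_def subset_iff)

lemma lc_add: "T \<subseteq> carrier B \<Longrightarrow> c \<in> T \<rightarrow> carrier A \<Longrightarrow> c' \<in> T \<rightarrow> carrier A \<Longrightarrow>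
   lc c T \<oplus> lc c' T = lc (\<lambda>s. c s \<oplus>\<^bsub>A\<^esub> c' s) T"
proof -
  assume a: "T \<subseteq> carrier B" "c \<in> T \<rightarrow> carrier A" "c' \<in> T \<rightarrow> carrier A"
  have "lc c T \<oplus> lc c' T = (\<Oplus>s\<in>T. phi (c s) \<otimes> s \<oplus> phi (c' s) \<otimes> s)"
    unfolding lc_def using a by (intro finsum_addf[symmetric]) (auto simp: Pi_def subset_iff)
  also have "\<dots> = lc (\<lambda>s. c s \<oplus>\<^bsub>A\<^esub> c' s) T"
    unfolding lc_def using a by (intro finsum_cong) (auto simp: Pi_def subset_iff phi_add l_distr)
  finally show ?thesis .
qed

lemma lc_smult: "finite T \<Longrightarrow> T \<subseteq> carrier B \<Longrightarrow> a \<in> carrier A \<Longrightarrow> c \<in> T \<rightarrow> carrier A \<Longrightarrow>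
   phi a \<otimes> lc c T = lc (\<lambda>s. a \<otimes>\<^bsub>A\<^esub> c s) T"
  unfolding lc_def
  by (subst finsum_rdistr) (auto intro!: finsum_cong simp: phi_mult m_assoc Pi_def subset_iff)

definition Sp where "Sp K = {b. \<exists>c \<in> S \<rightarrow> K. b = lc c S}"

lemma Sp_carrier: "K \<subseteq> carrier A \<Longrightarrow> Sp K \<subseteq> carrier B"
  unfolding Sp_def using S_sub by (auto intro!: lc_closed)

context fixes K assumes K: "ideal K A"
begin

lemma K_sub: "K \<subseteq> carrier A" using K ideal.axioms(1) additive_subgroup.a_subset by blast

lemma K_add: "a \<in> K \<Longrightarrow> b \<in> K \<Longrightarrow> a \<oplus>\<^bsub>A\<^esub> b \<in> K"
  using additive_subgroup.a_closed[OF ideal.axioms(1)[OF K]] .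

lemma Sp_add: "u \<in> Sp K \<Longrightarrow> v \<in> Sp K \<Longrightarrow> u \<oplus> v \<in> Sp K"
proof -
  assume "u \<in> Sp K" "v \<in> Sp K"
  then obtain c c' where c: "c \<in> S \<rightarrow> K" "u = lc c S" and c': "c' \<in> S \<rightarrow> K" "v = lc c' S"
    unfolding Sp_def by blast
  have "u \<oplus> v = lc (\<lambda>s. c s \<oplus>\<^bsub>A\<^esub> c' s) S"
    unfolding c c' using c c' K_sub S_sub by (intro lc_add) blast+
  moreover have "(\<lambda>s. c s \<oplus>\<^bsub>A\<^esub> c' s) \<in> S \<rightarrow> K" using c c' K_add by blast
  ultimately show ?thesis unfolding Sp_def by blast
qed

lemma Sp_smult_gen: "a \<in> carrier A \<Longrightarrow> v \<in> Sp K' \<Longrightarrow> K' \<subseteq> carrier A \<Longrightarrow>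
   (\<And>k. k \<in> K' \<Longrightarrow> a \<otimes>\<^bsub>A\<^esub> k \<in> K) \<Longrightarrow> phi a \<otimes> v \<in> Sp K"
proof -
  assume a: "a \<in> carrier A" and v: "v \<in> Sp K'" and K': "K' \<subseteq> carrier A"
    and h: "\<And>k. k \<in> K' \<Longrightarrow> a \<otimes>\<^bsub>A\<^esub> k \<in> K"
  then obtain c where c: "c \<in> S \<rightarrow> K'" "v = lc c S" unfolding Sp_def by blast
  have "phi a \<otimes> v = lc (\<lambda>s. a \<otimes>\<^bsub>A\<^esub> c s) S"
    unfolding c using c K' S_sub S_fin a by (intro lc_smult) blast+
  moreover have "(\<lambda>s. a \<otimes>\<^bsub>A\<^esub> c s) \<in> S \<rightarrow> K" using c h by blast
  ultimately show ?thesis unfolding Sp_def by blast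
qed

lemma Sp_smult: "a \<in> carrier A \<Longrightarrow> v \<in> Sp K \<Longrightarrow> phi a \<otimes> v \<in> Sp K"
proof -
  assume a: "a \<in> carrier A" and v: "v \<in> Sp K"
  show ?thesis using a v K_sub by (rule Sp_smult_gen) (rule ideal.I_l_closed[OF K _ a])
qed

lemma Sp_smult': "a \<in> K \<Longrightarrow> v \<in> Sp (carrier A) \<Longrightarrow> phi a \<otimes> v \<in> Sp K"
proof -
  assume a: "a \<in> K" and v: "v \<in> Sp (carrier A)"
  have ac: "a \<in> carrier A" using a K_sub by blast
  show ?thesis using ac v subset_refl by (rule Sp_smult_gen) (rule ideal.I_r_closed[OF K a])
qed

lemma Sp_zero: "\<zero> \<in> Sp K"
proof -
  have "lc (\<lambda>s. \<zero>\<^bsub>A\<^esub>) S = (\<Oplus>s\<in>S. \<zero>)"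
    unfolding lc_def
  proof (rule finsum_cong'[OF refl])
    show "(\<lambda>s. \<zero>) \<in> S \<rightarrow> carrier B" by blast
    fix s assume "s \<in> S" hence "s \<in> carrier B" using S_sub by blast
    thus "phi \<zero>\<^bsub>A\<^esub> \<otimes> s = \<zero>" by simp
  qed
  moreover have "(\<lambda>s. \<zero>\<^bsub>A\<^esub>) \<in> S \<rightarrow> K" using additive_subgroup.zero_closed[OF ideal.axioms(1)[OF K]] by blast
  moreover have "(\<Oplus>s\<in>S. \<zero>) = \<zero>" by simp
  ultimately show ?thesis unfolding Sp_def by force
qed

lemma Sp_finsum: "finite F \<Longrightarrow> f \<in> F \<rightarrow> Sp K \<Longrightarrow> finsum B f F \<in> Sp K"
proof (induction F rule: finite_induct)
  case empty thus ?case using Sp_zero by simp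
next
  case (insert x F)
  have "f \<in> insert x F \<rightarrow> carrier B" using insert Sp_carrier[OF K_sub] by blast
  hence fx: "f x \<in> carrier B" and fF: "f \<in> F \<rightarrow> carrier B" by auto
  have "finsum B f (insert x F) = f x \<oplus> finsum B f F"
    using finsum_insert[OF insert(1,2) fF fx] .
  moreover have "f x \<in> Sp K" using insert(4) by blast
  moreover have "finsum B f F \<in> Sp K" using insert(3,4) by blast
  ultimately show ?case using Sp_add by simp
qed

lemma Sp_all: "b \<in> carrier B \<Longrightarrow> b \<in> Sp (carrier A)"
proof -
  assume "b \<in> carrier B"
  then obtain c where "c \<in> S \<rightarrow> carrier A" "b = (\<Oplus>s\<in>S. phi (c s) \<otimes> s)" using S_gen by blast
  thus ?thesis unfolding Sp_def lc_def by blast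
qed

lemma Sp_mult: "b \<in> carrier B \<Longrightarrow> v \<in> Sp K \<Longrightarrow> b \<otimes> v \<in> Sp K"
proof -
  assume b: "b \<in> carrier B" and v: "v \<in> Sp K"
  then obtain c where c: "c \<in> S \<rightarrow> K" "v = lc c S" unfolding Sp_def by auto
  have cA: "c \<in> S \<rightarrow> carrier A" using c K_sub by blast
  have tc: "(\<lambda>s. phi (c s) \<otimes> s) \<in> S \<rightarrow> carrier B"
    using cA S_sub by (intro Pi_I term_closed) blast+
  have "b \<otimes> v = (\<Oplus>s\<in>S. b \<otimes> (phi (c s) \<otimes> s))"
    unfolding c lc_def using finsum_rdistr[OF S_fin b tc] .
  also have "\<dots> = (\<Oplus>s\<in>S. phi (c s) \<otimes> (b \<otimes> s))"
  proof (rule finsum_cong'[OF refl])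
    show "(\<lambda>s. phi (c s) \<otimes> (b \<otimes> s)) \<in> S \<rightarrow> carrier B"
      using cA S_sub b by (intro Pi_I m_closed phi_closed) blast+
    fix s assume s: "s \<in> S"
    have "s \<in> carrier B" "c s \<in> carrier A" using s S_sub cA by blast+
    thus "b \<otimes> (phi (c s) \<otimes> s) = phi (c s) \<otimes> (b \<otimes> s)" using b m_lcomm phi_closed by blast
  qed
  also have "\<dots> \<in> Sp K"
    using S_fin proof (rule Sp_finsum)
    show "(\<lambda>s. phi (c s) \<otimes> (b \<otimes> s)) \<in> S \<rightarrow> Sp K"
    proof
      fix s assume s: "s \<in> S"
      have "s \<in> carrier B" using s S_sub by blast
      hence "b \<otimes> s \<in> Sp (carrier A)" using b by (intro Sp_all m_closed)
      moreover have "c s \<in> K" using c s by blast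
      ultimately show "phi (c s) \<otimes> (b \<otimes> s) \<in> Sp K" by (rule Sp_smult'[rotated])
    qed
  qed
  finally show ?thesis .
qed

lemma Sp_neg: "u \<in> Sp K \<Longrightarrow> \<ominus> u \<in> Sp K"
proof -
  assume u: "u \<in> Sp K"
  have uc: "u \<in> carrier B" using u Sp_carrier[OF K_sub] by blast
  have "phi (\<ominus>\<^bsub>A\<^esub> \<one>\<^bsub>A\<^esub>) \<otimes> u \<in> Sp K" using u by (intro Sp_smult) auto
  moreover have "phi (\<ominus>\<^bsub>A\<^esub> \<one>\<^bsub>A\<^esub>) \<otimes> u = \<ominus> u" using uc by (simp add: phi_neg l_minus)
  ultimately show ?thesis by simp
qed

lemma Sp_ideal: "ideal (Sp K) B"
proof (rule idealI)
  show "ring B" by (rule ring_axioms)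
  have sub: "Sp K \<subseteq> carrier B" using Sp_carrier[OF K_sub] .
  show "subgroup (Sp K) (add_monoid B)"
  proof (rule subgroup.intro)
    show "Sp K \<subseteq> carrier (add_monoid B)" using sub by simp
    show "\<one>\<^bsub>add_monoid B\<^esub> \<in> Sp K" using Sp_zero by simp
    fix u v assume "u \<in> Sp K" "v \<in> Sp K"
    thus "u \<otimes>\<^bsub>add_monoid B\<^esub> v \<in> Sp K" using Sp_add by simp
  next
    fix u assume u: "u \<in> Sp K"
    show "inv\<^bsub>add_monoid B\<^esub> u \<in> Sp K" using Sp_neg[OF u] by (simp add: a_inv_def)
  qed
  fix a x assume a: "a \<in> Sp K" and x: "x \<in> carrier B"
  have ac: "a \<in> carrier B" using a sub by blast
  show "x \<otimes> a \<in> Sp K" using Sp_mult[OF x a] .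
  show "a \<otimes> x \<in> Sp K" using Sp_mult[OF x a] m_comm[OF x ac] by simp
qed

lemma Idl_Sp: "Idl (phi ` K) \<subseteq> Sp K"
proof (rule genideal_minimal[OF Sp_ideal])
  show "phi ` K \<subseteq> Sp K"
  proof
    fix y assume "y \<in> phi ` K"
    then obtain a where a: "a \<in> K" "y = phi a" by auto
    have "phi a \<otimes> \<one> \<in> Sp K" using a by (intro Sp_smult' Sp_all) auto
    thus "y \<in> Sp K" using a K_sub by auto
  qed
qed

end

end



context fin_alg begin

lemma max_sub: "maximalideal m A \<Longrightarrow> m \<subseteq> carrier A"
  by (meson maximalideal.axioms(1) ideal.Icarr subsetI)

lemma phi_img_sub: "K \<subseteq> carrier A \<Longrightarrow> phi ` K \<subseteq> carrier B"
  by (meson image_subsetI phi_closed subsetD)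

lemma phiIdl_ideal: "K \<subseteq> carrier A \<Longrightarrow> ideal (Idl (phi ` K)) B"
  by (rule genideal_ideal[OF phi_img_sub])

lemma phi_in_Idl: "a \<in> K \<Longrightarrow> K \<subseteq> carrier A \<Longrightarrow> phi a \<in> Idl (phi ` K)"
  by (meson genideal_self[OF phi_img_sub] imageI subsetD)

lemma crt_x:
  assumes I: "ideal I B" and u: "u \<in> carrier B"
  shows "finite F \<Longrightarrow> (\<And>m. m \<in> F \<Longrightarrow> maximalideal m A) \<Longrightarrow> (\<And>m. m \<in> F \<Longrightarrow> v m \<in> carrier B) \<Longrightarrow>
    (\<And>m. m \<in> F \<Longrightarrow> \<exists>w\<in>carrier B. w \<ominus> u \<in> I \<and> w \<ominus> v m \<in> Idl (phi ` m)) \<Longrightarrow>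
    \<exists>x\<in>carrier B. x \<ominus> u \<in> I \<and> (\<forall>m\<in>F. x \<ominus> v m \<in> Idl (phi ` m))"
proof (induction F rule: finite_induct)
  case empty
  interpret I: ideal I B by (rule I)
  have "u \<ominus> u \<in> I" using u I.zero_closed by (simp add: r_neg minus_eq)
  thus ?case using u by blast
next
  case (insert m0 F)
  interpret I: ideal I B by (rule I)
  have mx: "\<And>m. m \<in> insert m0 F \<Longrightarrow> maximalideal m A" by (rule insert.prems(1))
  have vc: "\<And>m. m \<in> insert m0 F \<Longrightarrow> v m \<in> carrier B" by (rule insert.prems(2))
  have "\<exists>x\<in>carrier B. x \<ominus> u \<in> I \<and> (\<forall>m\<in>F. x \<ominus> v m \<in> Idl (phi ` m))"
    by (rule insert.IH) (use insert.prems in blast)+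
  then obtain x' where x': "x' \<in> carrier B" "x' \<ominus> u \<in> I" "\<forall>m\<in>F. x' \<ominus> v m \<in> Idl (phi ` m)" by blast
  obtain w where w: "w \<in> carrier B" "w \<ominus> u \<in> I" "w \<ominus> v m0 \<in> Idl (phi ` m0)"
    using insert.prems(3)[of m0] by blast
  have mxF: "\<And>m. m \<in> F \<Longrightarrow> maximalideal m A" using mx by blast
  have m0: "maximalideal m0 A" using mx[OF insertI1] .
  obtain e where e: "e \<in> carrier A" "\<forall>m\<in>F. e \<in> m" "\<one>\<^bsub>A\<^esub> \<ominus>\<^bsub>A\<^esub> e \<in> m0"
    using A.e_exists[OF insert(1) mxF m0 insert(2)] by blast
  have pe: "phi e \<in> carrier B" using e(1) by simp
  define x where "x = x' \<oplus> phi e \<otimes> (w \<ominus> x')"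
  have xc: "x \<in> carrier B" unfolding x_def using x'(1) w(1) pe by simp
  have "x \<ominus> u = (x' \<ominus> u) \<oplus> phi e \<otimes> ((w \<ominus> u) \<ominus> (x' \<ominus> u))"
    unfolding x_def using x'(1) w(1) pe u by algebra
  moreover have "(x' \<ominus> u) \<oplus> phi e \<otimes> ((w \<ominus> u) \<ominus> (x' \<ominus> u)) \<in> I"
    using I.a_closed[OF x'(2) I.I_l_closed[OF ideal_minus[OF I w(2) x'(2)] pe]] .
  ultimately have 1: "x \<ominus> u \<in> I" by simp
  have 2: "x \<ominus> v m \<in> Idl (phi ` m)" if m: "m \<in> F" for m
  proof -
    have mm: "maximalideal m A" using mxF m .
    interpret J: ideal "Idl (phi ` m)" B using phiIdl_ideal[OF max_sub[OF mm]] .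
    have vm: "v m \<in> carrier B" using vc m by blast
    have "x \<ominus> v m = (x' \<ominus> v m) \<oplus> phi e \<otimes> (w \<ominus> x')"
      unfolding x_def using x'(1) w(1) pe vm by algebra
    moreover have pem: "phi e \<in> Idl (phi ` m)" using phi_in_Idl[OF _ max_sub[OF mm]] e(2) m by blast
    moreover have "(x' \<ominus> v m) \<oplus> phi e \<otimes> (w \<ominus> x') \<in> Idl (phi ` m)"
      using J.a_closed[OF bspec[OF x'(3) m] J.I_r_closed[OF pem minus_closed[OF w(1) x'(1)]]] .
    ultimately show ?thesis by simp
  qed
  have 3: "x \<ominus> v m0 \<in> Idl (phi ` m0)"
  proof -
    interpret J: ideal "Idl (phi ` m0)" B using phiIdl_ideal[OF max_sub[OF m0]] .
    have vm: "v m0 \<in> carrier B" using vc[OF insertI1] .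
    have pe': "phi (\<one>\<^bsub>A\<^esub> \<ominus>\<^bsub>A\<^esub> e) = \<one> \<ominus> phi e" using e(1) by (simp add: phi_minus)
    have "x \<ominus> v m0 = (\<one> \<ominus> phi e) \<otimes> (x' \<ominus> w) \<oplus> (w \<ominus> v m0)"
      unfolding x_def using x'(1) w(1) pe vm by algebra
    hence "x \<ominus> v m0 = phi (\<one>\<^bsub>A\<^esub> \<ominus>\<^bsub>A\<^esub> e) \<otimes> (x' \<ominus> w) \<oplus> (w \<ominus> v m0)" using pe' by simp
    moreover have p1: "phi (\<one>\<^bsub>A\<^esub> \<ominus>\<^bsub>A\<^esub> e) \<in> Idl (phi ` m0)" using phi_in_Idl[OF e(3) max_sub[OF m0]] .
    moreover have "phi (\<one>\<^bsub>A\<^esub> \<ominus>\<^bsub>A\<^esub> e) \<otimes> (x' \<ominus> w) \<oplus> (w \<ominus> v m0) \<in> Idl (phi ` m0)"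
      using J.a_closed[OF J.I_r_closed[OF p1 minus_closed[OF x'(1) w(1)]] w(3)] .
    ultimately show ?thesis by simp
  qed
  have 4: "\<forall>m\<in>insert m0 F. x \<ominus> v m \<in> Idl (phi ` m)"
  proof
    fix m assume "m \<in> insert m0 F"
    then consider "m = m0" | "m \<in> F" by blast
    thus "x \<ominus> v m \<in> Idl (phi ` m)" using 2 3 by cases simp_all
  qed
  show ?case using xc 1 4 by (intro bexI[of _ x] conjI)
qed

lemma per_m:
  assumes m: "maximalideal m A" and xc: "\<forall>i<d. x i \<in> carrier B"
    and gen: "generates_algebra A (B Quot Idl (phi ` m)) (\<lambda>a. Idl (phi ` m) +> phi a) d z"
    and xz: "\<forall>i<d. Idl (phi ` m) +> x i = z i"
    and b: "b \<in> carrier B"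
  shows "\<exists>r \<in> generate_ring B (phi ` carrier A \<union> x ` {..<d}). b \<ominus> r \<in> Idl (phi ` m)"
proof -
  define J where "J = Idl (phi ` m)"
  define R where "R = generate_ring B (phi ` carrier A \<union> x ` {..<d})"
  have Hc: "phi ` carrier A \<union> x ` {..<d} \<subseteq> carrier B" using xc by auto
  have Rs: "subring R B" unfolding R_def by (rule generate_ring_is_subring[OF Hc])
  have J: "ideal J B" unfolding J_def using m phiIdl_ideal max_sub by blast
  interpret J: ideal J B by (rule J)
  have hh: "ring_hom_ring B (B Quot J) ((+>) J)" by (rule J.rcos_ring_hom_ring)
  have Ks: "subring ((+>) J ` R) (B Quot J)" by (rule ring_hom_ring.img_is_subring[OF hh Rs])
  have rq: "ring (B Quot J)" by (rule J.quotient_is_ring)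
  define H where "H = (\<lambda>a. J +> phi a) ` carrier A \<union> z ` {..<d}"
  have HK: "H \<subseteq> (+>) J ` R"
  proof
    fix h assume "h \<in> H"
    then consider a where "a \<in> carrier A" "h = J +> phi a" | i where "i < d" "h = z i"
      unfolding H_def by blast
    thus "h \<in> (+>) J ` R"
    proof cases
      case 1
      have "phi a \<in> R" unfolding R_def using 1 by (intro generate_ring.incl) blast
      thus ?thesis using 1 by blast
    next
      case 2
      have "x i \<in> R" unfolding R_def using 2 by (intro generate_ring.incl) blast
      moreover have "h = J +> x i" using 2 xz unfolding J_def by simp
      ultimately show ?thesis by blast
    qed
  qed
  have HC: "H \<subseteq> carrier (B Quot J)" using HK subringE(1)[OF Ks] by blast
  have "generate_ring (B Quot J) H \<subseteq> (+>) J ` R"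
    by (rule ring.generate_ring_min_subring1[OF rq HC Ks HK])
  moreover have "generate_ring (B Quot J) H = carrier (B Quot J)"
    using gen unfolding generates_algebra_def H_def J_def by simp
  moreover have "J +> b \<in> carrier (B Quot J)"
    using a_rcosetsI[OF J.a_subset b] by (simp add: FactRing_def)
  ultimately obtain r where r: "r \<in> R" "J +> b = J +> r" by blast
  have rc: "r \<in> carrier B" using r(1) subringE(1)[OF Rs] by blast
  have "b \<ominus> r \<in> J" using r(2) coset_eq_iff[OF J b rc] by simp
  thus ?thesis using r(1) unfolding R_def J_def by blast
qed

end



context fin_alg begin

lemma combine:
  assumes R: "subring R B" and phiR: "phi ` carrier A \<subseteq> R"
    and loc: "\<And>m b. maximalideal m A \<Longrightarrow> b \<in> carrier B \<Longrightarrow> \<exists>r\<in>R. b \<ominus> r \<in> Idl (phi ` m)"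
  shows "finite F \<Longrightarrow> (\<And>m. m \<in> F \<Longrightarrow> maximalideal m A) \<Longrightarrow> b \<in> carrier B \<Longrightarrow>
     \<exists>r\<in>R. \<exists>c\<in>S \<rightarrow> carrier A. (\<forall>s\<in>S. \<forall>m\<in>F. c s \<in> m) \<and> b = r \<oplus> lc c S"
proof (induction F arbitrary: b rule: finite_induct)
  case empty
  obtain c where c: "c \<in> S \<rightarrow> carrier A" "b = lc c S" using S_gen[OF empty(2)] unfolding lc_def by blast
  have "b = \<zero> \<oplus> lc c S" using c S_sub by simp
  moreover have "\<zero> \<in> R" using subringE(2)[OF R] .
  ultimately show ?case using c(1) by blast
next
  case (insert m0 F)
  have b: "b \<in> carrier B" by (rule insert.prems(2))
  have mx: "\<And>m. m \<in> insert m0 F \<Longrightarrow> maximalideal m A" by (rule insert.prems(1))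
  have mxF: "\<And>m. m \<in> F \<Longrightarrow> maximalideal m A" using mx by simp
  have m0: "maximalideal m0 A" using mx[OF insertI1] .
  obtain r1 c1 where r1: "r1 \<in> R" and c1: "c1 \<in> S \<rightarrow> carrier A" "\<forall>s\<in>S. \<forall>m\<in>F. c1 s \<in> m" "b = r1 \<oplus> lc c1 S"
    using insert.IH[OF mxF b] by blast
  obtain r2 where r2: "r2 \<in> R" "b \<ominus> r2 \<in> Idl (phi ` m0)" using loc[OF m0 b] by blast
  have "b \<ominus> r2 \<in> Sp m0" using Idl_Sp[OF maximalideal.axioms(1)[OF m0]] r2(2) by (rule subsetD)
  then obtain c2 where c2: "c2 \<in> S \<rightarrow> m0" "b \<ominus> r2 = lc c2 S" unfolding Sp_def by blast
  have c2A: "c2 \<in> S \<rightarrow> carrier A" using c2(1) max_sub[OF m0] by (meson Pi_mono subsetD)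
  obtain e where e: "e \<in> carrier A" "\<forall>m\<in>F. e \<in> m" "\<one>\<^bsub>A\<^esub> \<ominus>\<^bsub>A\<^esub> e \<in> m0"
    using A.e_exists[OF insert(1) mxF m0 insert(2)] by blast
  define f where "f = \<one>\<^bsub>A\<^esub> \<ominus>\<^bsub>A\<^esub> e"
  have fc: "f \<in> carrier A" unfolding f_def using e(1) by simp
  define c where "c = (\<lambda>s. f \<otimes>\<^bsub>A\<^esub> c1 s \<oplus>\<^bsub>A\<^esub> e \<otimes>\<^bsub>A\<^esub> c2 s)"
  define r where "r = phi f \<otimes> r1 \<oplus> phi e \<otimes> r2"
  have Rc: "R \<subseteq> carrier B" using subringE(1)[OF R] .
  have r1c: "r1 \<in> carrier B" using r1 Rc by (rule subsetD[rotated])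
  have r2c: "r2 \<in> carrier B" using r2(1) Rc by (rule subsetD[rotated])
  have pf: "phi f \<in> R" using phiR fc by (meson image_subset_iff)
  have pe: "phi e \<in> R" using phiR e(1) by (meson image_subset_iff)
  have rR: "r \<in> R" unfolding r_def
    using subringE(7)[OF R subringE(6)[OF R pf r1(1)] subringE(6)[OF R pe r2(1)]] .
  have cA: "c \<in> S \<rightarrow> carrier A" unfolding c_def using c1(1) c2A fc e(1)
    by (intro Pi_I A.a_closed A.m_closed) (auto simp: Pi_def)
  have L1c: "lc c1 S \<in> carrier B" using c1(1) S_sub by simp
  have "b \<ominus> r1 = (r1 \<oplus> lc c1 S) \<ominus> r1" using c1(3) by simp
  also have "\<dots> = lc c1 S" using r1c L1c by algebra
  finally have L1: "lc c1 S = b \<ominus> r1" by simp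
  have L2c: "lc c2 S \<in> carrier B" using c2A S_sub by simp
  have "lc c S = lc (\<lambda>s. f \<otimes>\<^bsub>A\<^esub> c1 s) S \<oplus> lc (\<lambda>s. e \<otimes>\<^bsub>A\<^esub> c2 s) S"
    unfolding c_def using c1(1) c2A fc e(1) S_sub
    by (intro lc_add[symmetric]) (auto simp: Pi_def)
  also have "\<dots> = phi f \<otimes> lc c1 S \<oplus> phi e \<otimes> lc c2 S"
    using lc_smult[OF S_fin S_sub fc c1(1)] lc_smult[OF S_fin S_sub e(1) c2A] by simp
  also have "\<dots> = phi f \<otimes> (b \<ominus> r1) \<oplus> phi e \<otimes> (b \<ominus> r2)" using L1 c2(2) by simp
  finally have Lc: "lc c S = phi f \<otimes> (b \<ominus> r1) \<oplus> phi e \<otimes> (b \<ominus> r2)" .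
  have pfe: "phi f = \<one> \<ominus> phi e" unfolding f_def using e(1) by (simp add: phi_minus)
  have pec: "phi e \<in> carrier B" using e(1) by simp
  have fin0: "r \<oplus> lc c S = b" unfolding Lc r_def pfe using pec b r1c r2c by algebra
  have fin1: "\<forall>s\<in>S. \<forall>m\<in>insert m0 F. c s \<in> m"
  proof (intro ballI)
    fix s m assume s: "s \<in> S" and m: "m \<in> insert m0 F"
    interpret M: maximalideal m A using mx[OF m] .
    have c1s: "c1 s \<in> carrier A" "c2 s \<in> carrier A" using c1(1) c2A s by (auto simp: Pi_def)
    show "c s \<in> m"
    proof (cases "m = m0")
      case True
      have "f \<in> m" unfolding f_def using e(3) True by simp
      moreover have "c2 s \<in> m" using c2(1) s True by (auto simp: Pi_def)
      ultimately show ?thesis unfolding c_def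
        using M.a_closed[OF M.I_r_closed[OF _ c1s(1)] M.I_l_closed[OF _ e(1)]] by simp
    next
      case False
      hence mF: "m \<in> F" using m by simp
      have "c1 s \<in> m" using c1(2) s mF by simp
      moreover have "e \<in> m" using e(2) mF by simp
      ultimately show ?thesis unfolding c_def
        using M.a_closed[OF M.I_l_closed[OF _ fc] M.I_r_closed[OF _ c1s(2)]] by simp
    qed
  qed
  have fin2: "b = r \<oplus> lc c S" using fin0 by simp
  show ?case
  proof (rule bexI[of _ r])
    show "r \<in> R" by (rule rR)
    show "\<exists>c\<in>S \<rightarrow> carrier A. (\<forall>s\<in>S. \<forall>m\<in>insert m0 F. c s \<in> m) \<and> b = r \<oplus> lc c S"
    proof (rule bexI[of _ c])
      show "c \<in> S \<rightarrow> carrier A" by (rule cA)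
      show "(\<forall>s\<in>S. \<forall>m\<in>insert m0 F. c s \<in> m) \<and> b = r \<oplus> lc c S" using fin1 fin2 by (rule conjI)
    qed
  qed
qed

lemma nak:
  assumes R: "subring R B" and phiR: "phi ` carrier A \<subseteq> R"
  shows "finite T \<Longrightarrow> T \<subseteq> S \<Longrightarrow>
    (\<forall>b\<in>carrier B. \<exists>r\<in>R. \<exists>c\<in>T \<rightarrow> carrier A. (\<forall>s\<in>T. \<forall>m. maximalideal m A \<longrightarrow> c s \<in> m) \<and> b = r \<oplus> lc c T)
    \<Longrightarrow> carrier B \<subseteq> R"
proof (induction T rule: finite_induct)
  case empty
  have Rc: "R \<subseteq> carrier B" using subringE(1)[OF R] .
  show ?case
  proof
    fix b assume b: "b \<in> carrier B"
    then obtain r where r: "r \<in> R" "b = r \<oplus> lc (\<lambda>_. \<zero>\<^bsub>A\<^esub>) {}" using empty.prems(2) by auto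
    have "r \<in> carrier B" using r(1) Rc by (rule subsetD[rotated])
    hence "b = r" using r(2) by simp
    thus "b \<in> R" using r(1) by simp
  qed
next
  case (insert s T)
  have Rc: "R \<subseteq> carrier B" using subringE(1)[OF R] .
  have sS: "insert s T \<subseteq> S" by (rule insert.prems(1))
  have TS: "T \<subseteq> S" using sS by simp
  have iB: "insert s T \<subseteq> carrier B" using sS S_sub by (rule subset_trans)
  have sB: "s \<in> carrier B" using iB by simp
  have TB: "T \<subseteq> carrier B" using iB by simp
  have H: "\<And>b. b \<in> carrier B \<Longrightarrow> \<exists>r\<in>R. \<exists>c\<in>insert s T \<rightarrow> carrier A.
      (\<forall>t\<in>insert s T. \<forall>m. maximalideal m A \<longrightarrow> c t \<in> m) \<and> b = r \<oplus> lc c (insert s T)"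
    using insert.prems(2) by (rule bspec)
  obtain r0 c0 where r0: "r0 \<in> R" and c0: "c0 \<in> insert s T \<rightarrow> carrier A"
      "\<forall>t\<in>insert s T. \<forall>m. maximalideal m A \<longrightarrow> c0 t \<in> m" "s = r0 \<oplus> lc c0 (insert s T)"
    using H[OF sB] by blast
  have c0T: "c0 \<in> T \<rightarrow> carrier A" using c0(1) by (simp add: Pi_def)
  have ac: "c0 s \<in> carrier A" using c0(1) by (simp add: Pi_def)
  have r0c: "r0 \<in> carrier B" using r0 Rc by (rule subsetD[rotated])
  define L0 where "L0 = lc c0 T"
  have L0c: "L0 \<in> carrier B" unfolding L0_def using TB c0T by (rule lc_closed)
  have hs: "s = r0 \<oplus> (phi (c0 s) \<otimes> s \<oplus> L0)"
    using c0(3) lc_insert[OF insert(1) insert(2) iB c0(1)] unfolding L0_def by simp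
  have jac: "\<And>m. maximalideal m A \<Longrightarrow> c0 s \<in> m" using c0(2) by simp
  define u where "u = \<one>\<^bsub>A\<^esub> \<ominus>\<^bsub>A\<^esub> c0 s"
  have uU: "u \<in> Units A" unfolding u_def by (rule A.jacobson_unit[OF ac jac])
  define v where "v = inv\<^bsub>A\<^esub> u"
  have vc: "v \<in> carrier A" unfolding v_def using uU by simp
  have uc: "u \<in> carrier A" using uU by (simp add: Units_def)
  have vu: "v \<otimes>\<^bsub>A\<^esub> u = \<one>\<^bsub>A\<^esub>" unfolding v_def using uU by simp
  have pa: "phi (c0 s) \<in> carrier B" using ac by simp
  have pv: "phi v \<in> carrier B" using vc by simp
  have pvu: "phi v \<otimes> (\<one> \<ominus> phi (c0 s)) = \<one>"
    using phi_mult[OF vc uc] vu ac unfolding u_def by (simp add: phi_minus)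
  have e1: "s \<ominus> phi (c0 s) \<otimes> s = (r0 \<oplus> (phi (c0 s) \<otimes> s \<oplus> L0)) \<ominus> phi (c0 s) \<otimes> s"
    using hs by (rule arg_cong)
  have e2: "r0 \<oplus> L0 = s \<ominus> phi (c0 s) \<otimes> s"
    unfolding e1 using r0c L0c pa sB by algebra
  have "phi v \<otimes> r0 \<oplus> phi v \<otimes> L0 = phi v \<otimes> (r0 \<oplus> L0)" using pv r0c L0c by algebra
  also have "\<dots> = (phi v \<otimes> (\<one> \<ominus> phi (c0 s))) \<otimes> s" unfolding e2 using pv pa sB by algebra
  also have "\<dots> = s" using pvu sB by simp
  finally have hs2: "s = phi v \<otimes> r0 \<oplus> lc (\<lambda>t. v \<otimes>\<^bsub>A\<^esub> c0 t) T"
    using lc_smult[OF insert(1) TB vc c0T] unfolding L0_def by simp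
  have "carrier B \<subseteq> R"
  proof (rule insert.IH[OF TS], intro ballI)
    fix b assume b: "b \<in> carrier B"
    obtain r c where r: "r \<in> R" and c: "c \<in> insert s T \<rightarrow> carrier A"
        "\<forall>t\<in>insert s T. \<forall>m. maximalideal m A \<longrightarrow> c t \<in> m" "b = r \<oplus> lc c (insert s T)"
      using H[OF b] by blast
    have cT: "c \<in> T \<rightarrow> carrier A" using c(1) by (simp add: Pi_def)
    have csc: "c s \<in> carrier A" using c(1) by (simp add: Pi_def)
    have rc: "r \<in> carrier B" using r Rc by (rule subsetD[rotated])
    define c' where "c' = (\<lambda>t. c t \<oplus>\<^bsub>A\<^esub> c s \<otimes>\<^bsub>A\<^esub> (v \<otimes>\<^bsub>A\<^esub> c0 t))"
    define r' where "r' = r \<oplus> phi (c s) \<otimes> (phi v \<otimes> r0)"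
    have vc0: "(\<lambda>t. v \<otimes>\<^bsub>A\<^esub> c0 t) \<in> T \<rightarrow> carrier A" using vc c0T by (auto simp: Pi_def)
    have vc1: "(\<lambda>t. c s \<otimes>\<^bsub>A\<^esub> (v \<otimes>\<^bsub>A\<^esub> c0 t)) \<in> T \<rightarrow> carrier A" using csc vc c0T by (auto simp: Pi_def)
    have LcTc: "lc c T \<in> carrier B" using TB cT by (rule lc_closed)
    have Lvc: "lc (\<lambda>t. v \<otimes>\<^bsub>A\<^esub> c0 t) T \<in> carrier B" using TB vc0 by (rule lc_closed)
    have pcs: "phi (c s) \<in> carrier B" using csc by simp
    have hb: "b = r \<oplus> (phi (c s) \<otimes> s \<oplus> lc c T)"
      using c(3) lc_insert[OF insert(1) insert(2) iB c(1)] by simp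
    have "phi (c s) \<otimes> s = phi (c s) \<otimes> (phi v \<otimes> r0) \<oplus> phi (c s) \<otimes> lc (\<lambda>t. v \<otimes>\<^bsub>A\<^esub> c0 t) T"
      using hs2 pcs pv r0c Lvc by (metis r_distr m_closed)
    also have "phi (c s) \<otimes> lc (\<lambda>t. v \<otimes>\<^bsub>A\<^esub> c0 t) T = lc (\<lambda>t. c s \<otimes>\<^bsub>A\<^esub> (v \<otimes>\<^bsub>A\<^esub> c0 t)) T"
      using lc_smult[OF insert(1) TB csc vc0] .
    finally have hx: "phi (c s) \<otimes> s = phi (c s) \<otimes> (phi v \<otimes> r0) \<oplus> lc (\<lambda>t. c s \<otimes>\<^bsub>A\<^esub> (v \<otimes>\<^bsub>A\<^esub> c0 t)) T" .
    have Lc': "lc c T \<oplus> lc (\<lambda>t. c s \<otimes>\<^bsub>A\<^esub> (v \<otimes>\<^bsub>A\<^esub> c0 t)) T = lc c' T"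
      unfolding c'_def using lc_add[OF TB cT vc1] .
    have L1c: "lc (\<lambda>t. c s \<otimes>\<^bsub>A\<^esub> (v \<otimes>\<^bsub>A\<^esub> c0 t)) T \<in> carrier B" using TB vc1 by (rule lc_closed)
    define LL where "LL = lc (\<lambda>t. c s \<otimes>\<^bsub>A\<^esub> (v \<otimes>\<^bsub>A\<^esub> c0 t)) T"
    define LT where "LT = lc c T"
    have LLc: "LL \<in> carrier B" unfolding LL_def by (rule L1c)
    have LTc: "LT \<in> carrier B" unfolding LT_def by (rule LcTc)
    have hb': "b = r \<oplus> (phi (c s) \<otimes> (phi v \<otimes> r0) \<oplus> LL \<oplus> LT)"
      using hb hx unfolding LL_def LT_def by simp
    have "r \<oplus> (phi (c s) \<otimes> (phi v \<otimes> r0) \<oplus> LL \<oplus> LT) = r' \<oplus> (LT \<oplus> LL)"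
      unfolding r'_def using rc pcs pv r0c LLc LTc by algebra
    hence "b = r' \<oplus> (lc c T \<oplus> lc (\<lambda>t. c s \<otimes>\<^bsub>A\<^esub> (v \<otimes>\<^bsub>A\<^esub> c0 t)) T)"
      using hb' unfolding LL_def LT_def by simp
    hence fin2: "b = r' \<oplus> lc c' T" unfolding Lc' .
    have rR: "r' \<in> R" unfolding r'_def
    proof -
      have "phi (c s) \<in> R" "phi v \<in> R" using phiR csc vc by (meson image_subset_iff)+
      thus "r \<oplus> phi (c s) \<otimes> (phi v \<otimes> r0) \<in> R"
        using subringE(7)[OF R r subringE(6)[OF R _ subringE(6)[OF R _ r0]]] by simp
    qed
    have cA: "c' \<in> T \<rightarrow> carrier A" unfolding c'_def using cT vc1 by (auto simp: Pi_def)
    have fin1: "\<forall>t\<in>T. \<forall>m. maximalideal m A \<longrightarrow> c' t \<in> m"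
    proof (intro ballI allI impI)
      fix t m assume t: "t \<in> T" and m: "maximalideal m A"
      interpret M: maximalideal m A by (rule m)
      have "c t \<in> m" using c(2) t m by simp
      moreover have "c0 t \<in> m" using c0(2) t m by simp
      hence "v \<otimes>\<^bsub>A\<^esub> c0 t \<in> m" using M.I_l_closed vc by simp
      hence "c s \<otimes>\<^bsub>A\<^esub> (v \<otimes>\<^bsub>A\<^esub> c0 t) \<in> m" using M.I_l_closed csc by simp
      ultimately show "c' t \<in> m" unfolding c'_def using M.a_closed by simp
    qed
    show "\<exists>r\<in>R. \<exists>c\<in>T \<rightarrow> carrier A. (\<forall>s\<in>T. \<forall>m. maximalideal m A \<longrightarrow> c s \<in> m) \<and> b = r \<oplus> lc c T"
    proof (rule bexI[of _ r'])
      show "r' \<in> R" by (rule rR)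
      show "\<exists>c\<in>T \<rightarrow> carrier A. (\<forall>s\<in>T. \<forall>m. maximalideal m A \<longrightarrow> c s \<in> m) \<and> b = r' \<oplus> lc c T"
      proof (rule bexI[of _ c'])
        show "c' \<in> T \<rightarrow> carrier A" by (rule cA)
        show "(\<forall>s\<in>T. \<forall>m. maximalideal m A \<longrightarrow> c' s \<in> m) \<and> b = r' \<oplus> lc c' T" using fin1 fin2 by (rule conjI)
      qed
    qed
  qed
  thus ?case .
qed

end


context fin_alg begin

lemma coset_rep:
  assumes J: "ideal J B" and Xc: "Xc \<in> carrier (B Quot J)"
  shows "\<exists>u. u \<in> carrier B \<and> Xc = J +> u"
proof -
  have "Xc \<in> a_rcosets J" using Xc by (simp add: FactRing_def)
  thus ?thesis unfolding A_RCOSETS_def' by blast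
qed

lemma main:
  assumes finM: "finite {m. maximalideal m A}"
    and I: "ideal I B"
    and iota_Y: "generates_algebra A (B Quot I) (\<lambda>a. I +> phi a) d y"
    and iota_m: "\<And>m. maximalideal m A \<Longrightarrow>
          generates_algebra A (B Quot ext_ideal B phi m) (\<lambda>a. ext_ideal B phi m +> phi a) d (z m)"
    and compat: "\<And>m i. maximalideal m A \<Longrightarrow> i < d \<Longrightarrow>
          (\<exists>u \<in> y i. \<exists>v \<in> z m i. u \<ominus> v \<in> I <+> ext_ideal B phi m)"
  shows "\<exists>x. generates_algebra A B phi d x \<and>
           (\<forall>i<d. I +> x i = y i) \<and>
           (\<forall>m. maximalideal m A \<longrightarrow> (\<forall>i<d. ext_ideal B phi m +> x i = z m i))"
proof -
  interpret I: ideal I B by (rule I)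
  define M where "M = {m. maximalideal m A}"
  have ext: "\<And>m. ext_ideal B phi m = Idl (phi ` m)" unfolding ext_ideal_def by simp
  have Jid: "\<And>m. maximalideal m A \<Longrightarrow> ideal (Idl (phi ` m)) B"
    using phiIdl_ideal max_sub by meson
  define u0 where "u0 i = (SOME u. u \<in> carrier B \<and> y i = I +> u)" for i
  define v0 where "v0 m i = (SOME v. v \<in> carrier B \<and> z m i = Idl (phi ` m) +> v)" for m i
  have u0: "u0 i \<in> carrier B \<and> y i = I +> u0 i" if i: "i < d" for i
  proof -
    have "y i \<in> carrier (B Quot I)" using iota_Y i unfolding generates_algebra_def by simp
    hence "\<exists>u. u \<in> carrier B \<and> y i = I +> u" by (rule coset_rep[OF I])
    thus ?thesis unfolding u0_def by (rule someI_ex)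
  qed
  have v0: "v0 m i \<in> carrier B \<and> z m i = Idl (phi ` m) +> v0 m i" if i: "i < d" and m: "maximalideal m A" for m i
  proof -
    have "z m i \<in> carrier (B Quot Idl (phi ` m))" using iota_m[OF m] i unfolding generates_algebra_def ext by simp
    hence "\<exists>v. v \<in> carrier B \<and> z m i = Idl (phi ` m) +> v" by (rule coset_rep[OF Jid[OF m]])
    thus ?thesis unfolding v0_def by (rule someI_ex)
  qed
  have exx: "\<exists>xx\<in>carrier B. xx \<ominus> u0 i \<in> I \<and> (\<forall>m\<in>M. xx \<ominus> v0 m i \<in> Idl (phi ` m))" if i: "i < d" for i
  proof (rule crt_x[OF I])
    show "u0 i \<in> carrier B" using u0[OF i] by simp
    show "finite M" using finM unfolding M_def .
    show "\<And>m. m \<in> M \<Longrightarrow> maximalideal m A" unfolding M_def by simp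
    show "\<And>m. m \<in> M \<Longrightarrow> v0 m i \<in> carrier B" unfolding M_def using v0[OF i] by simp
    fix m assume "m \<in> M"
    hence m: "maximalideal m A" unfolding M_def by simp
    interpret J: ideal "Idl (phi ` m)" B by (rule Jid[OF m])
    have u0c: "u0 i \<in> carrier B" and yi: "y i = I +> u0 i" using u0[OF i] by auto
    have v0c: "v0 m i \<in> carrier B" and zi: "z m i = Idl (phi ` m) +> v0 m i" using v0[OF i m] by auto
    obtain u v where u: "u \<in> y i" and v: "v \<in> z m i" and uv: "u \<ominus> v \<in> I <+> Idl (phi ` m)"
      using compat[OF m i] unfolding ext by blast
    have uI: "u \<in> I +> u0 i" using u yi by simp
    have vJ: "v \<in> Idl (phi ` m) +> v0 m i" using v zi by simp
    have uc: "u \<in> carrier B" using I.a_elemrcos_carrier[OF u0c uI] .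
    have vc: "v \<in> carrier B" using J.a_elemrcos_carrier[OF v0c vJ] .
    have uu: "u \<ominus> u0 i \<in> I" using uI I.a_rcos_module_minus[OF ring_axioms u0c uc] by simp
    have vv: "v \<ominus> v0 m i \<in> Idl (phi ` m)" using vJ J.a_rcos_module_minus[OF ring_axioms v0c vc] by simp
    obtain p q where p: "p \<in> I" and q: "q \<in> Idl (phi ` m)" and pq: "u \<ominus> v = p \<oplus> q"
      using uv unfolding set_add_def' by blast
    have pc: "p \<in> carrier B" using I.Icarr[OF p] .
    have qc: "q \<in> carrier B" using J.Icarr[OF q] .
    define w where "w = u \<ominus> p"
    have wc: "w \<in> carrier B" unfolding w_def using uc pc by simp
    have "w \<ominus> u0 i = (u \<ominus> u0 i) \<ominus> p" unfolding w_def using uc pc u0c by algebra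
    hence w1: "w \<ominus> u0 i \<in> I" using ideal_minus[OF I uu p] by simp
    have "w \<ominus> v0 m i = ((u \<ominus> v) \<ominus> p) \<oplus> (v \<ominus> v0 m i)" unfolding w_def using uc vc pc v0c by algebra
    also have "(u \<ominus> v) \<ominus> p = q" unfolding pq using pc qc by algebra
    finally have "w \<ominus> v0 m i = q \<oplus> (v \<ominus> v0 m i)" .
    hence w2: "w \<ominus> v0 m i \<in> Idl (phi ` m)" using J.a_closed[OF q vv] by simp
    show "\<exists>w\<in>carrier B. w \<ominus> u0 i \<in> I \<and> w \<ominus> v0 m i \<in> Idl (phi ` m)"
      using wc w1 w2 by blast
  qed
  define x where "x i = (SOME xx. xx \<in> carrier B \<and> xx \<ominus> u0 i \<in> I \<and> (\<forall>m\<in>M. xx \<ominus> v0 m i \<in> Idl (phi ` m)))" for i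
  have x: "x i \<in> carrier B \<and> x i \<ominus> u0 i \<in> I \<and> (\<forall>m\<in>M. x i \<ominus> v0 m i \<in> Idl (phi ` m))" if i: "i < d" for i
  proof -
    have "\<exists>xx. xx \<in> carrier B \<and> xx \<ominus> u0 i \<in> I \<and> (\<forall>m\<in>M. xx \<ominus> v0 m i \<in> Idl (phi ` m))"
      using exx[OF i] by blast
    thus ?thesis unfolding x_def by (rule someI_ex)
  qed
  have xc: "\<forall>i<d. x i \<in> carrier B" using x by blast
  have xy: "\<forall>i<d. I +> x i = y i"
  proof (intro allI impI)
    fix i assume i: "i < d"
    have "I +> x i = I +> u0 i" using coset_eq_iff[OF I] x[OF i] u0[OF i] by blast
    thus "I +> x i = y i" using u0[OF i] by simp
  qed
  have xz: "\<forall>i<d. Idl (phi ` m) +> x i = z m i" if m: "maximalideal m A" for m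
  proof (intro allI impI)
    fix i assume i: "i < d"
    have mM: "m \<in> M" unfolding M_def using m by simp
    have "Idl (phi ` m) +> x i = Idl (phi ` m) +> v0 m i"
      using coset_eq_iff[OF Jid[OF m]] x[OF i] v0[OF i m] mM by blast
    thus "Idl (phi ` m) +> x i = z m i" using v0[OF i m] by simp
  qed
  define R where "R = generate_ring B (phi ` carrier A \<union> x ` {..<d})"
  have Hc: "phi ` carrier A \<union> x ` {..<d} \<subseteq> carrier B" using xc by auto
  have Rs: "subring R B" unfolding R_def by (rule generate_ring_is_subring[OF Hc])
  have phiR: "phi ` carrier A \<subseteq> R" unfolding R_def using generate_ring.incl by (metis UnCI subsetI)
  have loc: "\<And>m b. maximalideal m A \<Longrightarrow> b \<in> carrier B \<Longrightarrow> \<exists>r\<in>R. b \<ominus> r \<in> Idl (phi ` m)"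
  proof -
    fix m b assume m: "maximalideal m A" and b: "b \<in> carrier B"
    show "\<exists>r\<in>R. b \<ominus> r \<in> Idl (phi ` m)" unfolding R_def
      by (rule per_m[OF m xc _ xz[OF m] b]) (use iota_m[OF m] in \<open>simp add: ext\<close>)
  qed
  have hyp: "\<forall>b\<in>carrier B. \<exists>r\<in>R. \<exists>c\<in>S \<rightarrow> carrier A. (\<forall>s\<in>S. \<forall>m. maximalideal m A \<longrightarrow> c s \<in> m) \<and> b = r \<oplus> lc c S"
  proof
    fix b assume b: "b \<in> carrier B"
    have "\<exists>r\<in>R. \<exists>c\<in>S \<rightarrow> carrier A. (\<forall>s\<in>S. \<forall>m\<in>M. c s \<in> m) \<and> b = r \<oplus> lc c S"
      by (rule combine[OF Rs phiR loc]) (use finM b in \<open>simp_all add: M_def\<close>)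
    thus "\<exists>r\<in>R. \<exists>c\<in>S \<rightarrow> carrier A. (\<forall>s\<in>S. \<forall>m. maximalideal m A \<longrightarrow> c s \<in> m) \<and> b = r \<oplus> lc c S"
      unfolding M_def by simp
  qed
  have "carrier B \<subseteq> R" by (rule nak[OF Rs phiR S_fin subset_refl hyp])
  moreover have "R \<subseteq> carrier B" using subringE(1)[OF Rs] .
  ultimately have "R = carrier B" by blast
  hence "generates_algebra A B phi d x" unfolding generates_algebra_def R_def using xc by simp
  thus ?thesis using xy xz unfolding ext by blast
qed

end


theorem proposition3p1:
  fixes A :: "'a ring" and B :: "'b ring" and phi :: "'a \<Rightarrow> 'b"
    and I :: "'b set" and d :: nat
    and y :: "nat \<Rightarrow> 'b set"
    and z :: "'a set \<Rightarrow> nat \<Rightarrow> 'b set"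
  assumes semilocal: "semilocal A"
    and finite_Z: "finite_algebra A B phi"
    and closed_Y: "ideal I B"
    and d_pos: "d > 0"
    and iota_Y: "closed_imm A (B Quot I) (\<lambda>a. I +>\<^bsub>B\<^esub> phi a) d y"
    and iota_m: "\<And>m. maximalideal m A \<Longrightarrow>
          closed_imm A (B Quot ext_ideal B phi m) (\<lambda>a. ext_ideal B phi m +>\<^bsub>B\<^esub> phi a) d (z m)"
    and compat: "\<And>m i. maximalideal m A \<Longrightarrow> i < d \<Longrightarrow>
          (\<exists>u \<in> y i. \<exists>v \<in> z m i. u \<ominus>\<^bsub>B\<^esub> v \<in> I <+>\<^bsub>B\<^esub> ext_ideal B phi m)"
  shows "\<exists>x. closed_imm A B phi d x \<and>
           (\<forall>i<d. I +>\<^bsub>B\<^esub> x i = y i) \<and>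
           (\<forall>m. maximalideal m A \<longrightarrow> (\<forall>i<d. ext_ideal B phi m +>\<^bsub>B\<^esub> x i = z m i))"
proof -
  have cA: "cring A" and finM: "finite {m. maximalideal m A}"
    using semilocal unfolding semilocal_def by auto
  obtain S where cB: "cring B" and hom: "phi \<in> ring_hom A B" and Sf: "finite S" and Ss: "S \<subseteq> carrier B"
    and Sg: "\<forall>b \<in> carrier B. \<exists>c \<in> S \<rightarrow> carrier A. b = (\<Oplus>\<^bsub>B\<^esub> s\<in>S. phi (c s) \<otimes>\<^bsub>B\<^esub> s)"
    using finite_Z unfolding finite_algebra_def by blast
  have fa: "fin_alg B A phi S"
  proof (rule fin_alg.intro[OF cB], rule fin_alg_axioms.intro)
    show "cring A" by (rule cA)
    show "phi \<in> ring_hom A B" by (rule hom)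
    show "finite S" by (rule Sf)
    show "S \<subseteq> carrier B" by (rule Ss)
    fix b assume b: "b \<in> carrier B"
    show "\<exists>c \<in> S \<rightarrow> carrier A. b = (\<Oplus>\<^bsub>B\<^esub> s\<in>S. phi (c s) \<otimes>\<^bsub>B\<^esub> s)" using bspec[OF Sg b] .
  qed
  show ?thesis by (rule fin_alg.main[OF fa finM closed_Y iota_Y iota_m compat])
qed

end
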